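(* Let $\langle B,\wedge,{}'\rangle$ be an algebra with $\wedge$ binary and ${}'$ unary satisfying $x\wedge y\approx y\wedge x$, $x\wedge(y\wedge z)\approx(x\wedge y)\wedge z$, $x''\approx x$, and $x'\approx (x\wedge y)'\wedge(x\wedge y')'$. Then for all $x,y,z\in B$, writing $0=z\wedge z'$, we have $0'\wedge[(x\wedge y)\wedge(x\wedge y)]'=[y\wedge(x\wedge y)]'$.
   Context: In such an algebra the element $z\wedge z'$ does not depend on $z$; the paper denotes it $0$. *)

theory Defs
  imports Main
begin

end

theory Submission
  imports Defs
begin

theorem lemma2p8:
  fixes m :: "'b \<Rightarrow> 'b \<Rightarrow> 'b" and c :: "'b \<Rightarrow> 'b"
  assumes comm: "\<And>x y. m x y = m y x"
    and assoc: "\<And>x y z. m x (m y z) = m (m x y) z"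
    and invol: "\<And>x. c (c x) = x"
    and ax4: "\<And>x y. c x = m (c (m x y)) (c (m x (c y)))"
  shows "m (c (m z (c z))) (c (m (m x y) (m x y))) = c (m y (m x y))"
proof -
  have L1: "\<And>x y. m x (c x) = m y (c y)"
    by (smt (verit, best) assoc ax4 comm invol)
  have L2: "\<And>x. m x x = x"
    by (smt (verit, ccfv_SIG) assoc ax4 comm invol)
  have L3: "\<And>a. m (c (m z (c z))) (c a) = c a"
    by (metis L2 invol L1 ax4)
  have "m y (m x y) = m x y" by (metis L2 assoc comm)
  then show ?thesis using L2 L3 by simp
qed

end
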